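(* Let $k\ge0$ and let $n$ be a positive integer of length $l$ with $k(n)\le k$. Then $$\sum_{\substack{m:\ \mathrm{ld}_l(m)=n\\ k(m)=k}}\frac1m=\sum_{m=0}^{\infty}(-1)^m\frac{u_{k-k(n);m}}{n^{m+1}}.$$
   Context: Fix $b\ge2$ and $d\in\{0,\dots,b-1\}$. For an integer $n\ge0$, its length $l(n)$ is the smallest $l\ge0$ with $n<b^l$, and $k(n)$ is the number of occurrences of $d$ in its base-$b$ representation without leading zeros. For $m>0$ of length $q\ge l$, $\mathrm{ld}_l(m)=\lfloor m/b^{q-l}\rfloor$ (the sum on the left runs over positive integers $m$ of length $\ge l$). A string is a finite sequence $X=(d_l,\dots,d_1)$ of digits in $\{0,\dots,b-1\}$ (leading zeros allowed), of length $|X|=l\ge0$; its value is $n(X)=\sum_{i=1}^{l}d_ib^{i-1}$ ($0$ for the empty string). For $k\ge0$, $\mu_k=\sum_{X}b^{-|X|}\delta_{n(X)/b^{|X|}}$, the sum over all strings $X$ containing $d$ exactly $k$ times; it is a finite measure on $[0,1)$ of total mass $b$. The moments are $u_{k;m}=\int_{[0,1)}x^m\,d\mu_k(x)$ (with $0^0=1$). *)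

theory Defs
  imports "HOL-Analysis.Analysis"
begin

definition blen :: "nat \<Rightarrow> nat \<Rightarrow> nat" where
  "blen b n = (LEAST l. n < b ^ l)"

definition kcount :: "nat \<Rightarrow> nat \<Rightarrow> nat \<Rightarrow> nat" where
  "kcount b d n = card {i. i < blen b n \<and> (n div b ^ i) mod b = d}"

definition ld :: "nat \<Rightarrow> nat \<Rightarrow> nat \<Rightarrow> nat" where
  "ld b l m = m div b ^ (blen b m - l)"

text \<open>Strings: lists of digits, most significant digit first. Value n(X).\<close>
definition strval :: "nat \<Rightarrow> nat list \<Rightarrow> nat" where
  "strval b X = foldl (\<lambda>a x. a * b + x) 0 X"

definition strings :: "nat \<Rightarrow> nat \<Rightarrow> nat \<Rightarrow> nat list set" where
  "strings b d k = {X. set X \<subseteq> {..<b} \<and> count_list X d = k}"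

text \<open>Moments u_{k;m} = integral of x^m d mu_k, mu_k = sum b^{-|X|} delta_{n(X)/b^|X|}.\<close>
definition umom :: "nat \<Rightarrow> nat \<Rightarrow> nat \<Rightarrow> nat \<Rightarrow> real" where
  "umom b d k m = (\<Sum>\<^sub>\<infinity> X \<in> strings b d k.
      (1 / real b ^ length X) * (real (strval b X) / real b ^ length X) ^ m)"

end

theory Submission
  imports Defs
begin


definition dc :: "nat \<Rightarrow> nat \<Rightarrow> nat \<Rightarrow> nat \<Rightarrow> nat" where
  "dc b d L v = card {i. i < L \<and> (v div b ^ i) mod b = d}"

lemma digit_low:
  fixes a b c :: nat
  assumes "b > 0" "i < L2"
  shows "((a*b^L2+c) div b^i) mod b = (c div b^i) mod b"
proof -
  obtain t where t: "L2 = Suc (t + i)" using assms(2) by (metis add.commute less_iff_Suc_add)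
  have e: "b^L2 = (b^t * b) * b^i" by (simp add: t power_add mult_ac)
  have "a*b^L2+c = c + (a*b^t * b) * b^i" unfolding e by (simp add: algebra_simps)
  moreover have "(c + (a*b^t * b) * b^i) div b^i = (a*b^t * b) + c div b^i"
    using assms by simp
  ultimately have "(a*b^L2+c) div b^i = (a*b^t * b) + c div b^i" by (metis (no_types))
  then show ?thesis by (simp add: add.commute)
qed

lemma digit_high:
  fixes a b c :: nat
  assumes "b > 0" "c < b^L2"
  shows "((a*b^L2+c) div b^(L2+j)) = a div b^j"
proof -
  have "(c + a*b^L2) div b^L2 = a + c div b^L2" using assms by simp
  then have "(a*b^L2+c) div b^L2 = a" using assms by (simp add: add.commute)
  then show ?thesis by (simp add: power_add div_mult2_eq)
qed

lemma dc_split: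
  assumes "b > 0" "c < b^L2"
  shows "dc b d (L1+L2) (a*b^L2 + c) = dc b d L1 a + dc b d L2 c"
proof -
  let ?v = "a*b^L2 + c"
  have eq: "{i. i < L1+L2 \<and> (?v div b ^ i) mod b = d} =
     {i. i < L2 \<and> (c div b ^ i) mod b = d} \<union> (\<lambda>j. L2 + j) ` {j. j < L1 \<and> (a div b ^ j) mod b = d}"
  proof (rule set_eqI, rule iffI)
    fix i assume "i \<in> {i. i < L1+L2 \<and> (?v div b ^ i) mod b = d}"
    then have i: "i < L1+L2" "(?v div b ^ i) mod b = d" by auto
    show "i \<in> {i. i < L2 \<and> (c div b ^ i) mod b = d} \<union> (\<lambda>j. L2 + j) ` {j. j < L1 \<and> (a div b ^ j) mod b = d}"
    proof (cases "i < L2")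
      case True then show ?thesis using i digit_low[OF assms(1) True, of a c] by auto
    next
      case False
      then obtain j where j: "i = L2 + j" by (metis le_add_diff_inverse not_less)
      then show ?thesis using i digit_high[OF assms, of a j] by auto
    qed
  next
    fix i assume "i \<in> {i. i < L2 \<and> (c div b ^ i) mod b = d} \<union> (\<lambda>j. L2 + j) ` {j. j < L1 \<and> (a div b ^ j) mod b = d}"
    then show "i \<in> {i. i < L1+L2 \<and> (?v div b ^ i) mod b = d}"
      using digit_low[OF assms(1), of _ L2 a c] digit_high[OF assms, of a] by auto
  qed
  have "card ({i. i < L2 \<and> (c div b ^ i) mod b = d} \<union> (\<lambda>j. L2 + j) ` {j. j < L1 \<and> (a div b ^ j) mod b = d})
     = card {i. i < L2 \<and> (c div b ^ i) mod b = d} + card ((\<lambda>j. L2 + j) ` {j. j < L1 \<and> (a div b ^ j) mod b = d})"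
    by (rule card_Un_disjoint) auto
  also have "card ((\<lambda>j. L2 + j) ` {j. j < L1 \<and> (a div b ^ j) mod b = d}) = card {j. j < L1 \<and> (a div b ^ j) mod b = d}"
    by (rule card_image) (auto simp: inj_on_def)
  finally show ?thesis unfolding dc_def eq by simp
qed

lemma strval_Nil[simp]: "strval b [] = 0" by (simp add: strval_def)
lemma strval_snoc[simp]: "strval b (X @ [x]) = strval b X * b + x" by (simp add: strval_def)

lemma strval_lt: "set X \<subseteq> {..<b} \<Longrightarrow> strval b X < b ^ length X"
proof (induction X rule: rev_induct)
  case Nil then show ?case by simp
next
  case (snoc x X)
  then have h: "strval b X + 1 \<le> b ^ length X" "x < b" by auto
  have "strval b X * b + x < (strval b X + 1) * b" using h by simp
  also have "\<dots> \<le> b ^ length X * b" using h by (intro mult_right_mono) auto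
  finally show ?case by (simp add: mult.commute)
qed

lemma dc_one: "b > 0 \<Longrightarrow> x < b \<Longrightarrow> dc b d 1 x = (if x = d then 1 else 0)"
proof -
  assume "b > 0" "x < b"
  then have "{i. i < 1 \<and> (x div b ^ i) mod b = d} = (if x = d then {0} else {})" by auto
  then show ?thesis unfolding dc_def by simp
qed

lemma dc_strval: "b > 0 \<Longrightarrow> set X \<subseteq> {..<b} \<Longrightarrow> dc b d (length X) (strval b X) = count_list X d"
proof (induction X rule: rev_induct)
  case Nil then show ?case by (simp add: dc_def)
next
  case (snoc x X)
  have "dc b d (length X + 1) (strval b X * b ^ 1 + x) = dc b d (length X) (strval b X) + dc b d 1 x"
    using snoc by (intro dc_split) auto
  then show ?case using snoc dc_one[of b x d] by simp
qed

fun digs :: "nat \<Rightarrow> nat \<Rightarrow> nat \<Rightarrow> nat list" where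
  "digs b 0 r = []"
| "digs b (Suc L) r = digs b L (r div b) @ [r mod b]"

lemma digs_length[simp]: "length (digs b L r) = L" by (induction L arbitrary: r) auto
lemma digs_set: "b > 0 \<Longrightarrow> set (digs b L r) \<subseteq> {..<b}" by (induction L arbitrary: r) auto
lemma strval_digs: "strval b (digs b L r) = r mod b ^ L"
  by (induction L arbitrary: r) (auto simp: mod_mult2_eq mult.commute)
lemma digs_strval: "b > 0 \<Longrightarrow> set X \<subseteq> {..<b} \<Longrightarrow> digs b (length X) (strval b X) = X"
proof (induction X rule: rev_induct)
  case Nil then show ?case by simp
next
  case (snoc x X)
  then have "x < b" by auto
  with snoc show ?case by simp
qed



lemma pow_gt_self: "(b::nat) \<ge> 2 \<Longrightarrow> n < b ^ n"
proof -
  assume "b \<ge> 2"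
  have "n < 2 ^ n" by (rule less_exp)
  also have "(2::nat) ^ n \<le> b ^ n" using \<open>b \<ge> 2\<close> by (rule power_mono) simp
  finally show ?thesis .
qed

lemma blen_lt: "b \<ge> 2 \<Longrightarrow> n < b ^ blen b n"
  unfolding blen_def by (rule LeastI[of _ n]) (rule pow_gt_self)

lemma blen_ge: "l < blen b n \<Longrightarrow> b ^ l \<le> n"
  unfolding blen_def using not_less_Least by (metis not_le)

lemma blen_eq: "n < b ^ q \<Longrightarrow> (\<And>l. l < q \<Longrightarrow> b ^ l \<le> n) \<Longrightarrow> blen b n = q"
  unfolding blen_def by (rule Least_equality) (auto simp: not_le[symmetric])

lemma blen_pos: "b \<ge> 2 \<Longrightarrow> n > 0 \<Longrightarrow> blen b n \<ge> 1"
  using blen_lt[of b n] by (cases "blen b n") auto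

lemma kcount_dc: "kcount b d n = dc b d (blen b n) n"
  unfolding kcount_def dc_def ..

lemma compose_facts:
  assumes b: "b \<ge> 2" and n: "n > 0" and v: "v < b ^ L"
  shows "blen b (n * b ^ L + v) = blen b n + L"
    and "kcount b d (n * b ^ L + v) = kcount b d n + dc b d L v"
proof -
  let ?l = "blen b n"
  have l1: "?l \<ge> 1" using blen_pos[OF b n] .
  have nl: "n < b ^ ?l" using blen_lt[OF b] .
  have nge: "b ^ (?l - 1) \<le> n" using blen_ge[of "?l - 1" b n] l1 by simp
  have lt: "n * b ^ L + v < b ^ (?l + L)"
  proof -
    have "n * b ^ L + v < (n + 1) * b ^ L" using v by simp
    also have "\<dots> \<le> b ^ ?l * b ^ L" using nl by (intro mult_right_mono) auto
    finally show ?thesis by (simp add: power_add)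
  qed
  have ge: "b ^ j \<le> n * b ^ L + v" if "j < ?l + L" for j
  proof -
    have "b ^ j \<le> b ^ (?l - 1 + L)" using that b by (intro power_increasing) auto
    also have "\<dots> = b ^ (?l - 1) * b ^ L" by (simp add: power_add)
    also have "\<dots> \<le> n * b ^ L" using nge by (intro mult_right_mono) auto
    finally show ?thesis by simp
  qed
  show bl: "blen b (n * b ^ L + v) = ?l + L" by (rule blen_eq[OF lt ge])
  show "kcount b d (n * b ^ L + v) = kcount b d n + dc b d L v"
    unfolding kcount_dc bl using dc_split[of b v L d ?l n] b v by simp
qed

definition Sset :: "nat \<Rightarrow> nat \<Rightarrow> nat \<Rightarrow> nat \<Rightarrow> nat list set" where
  "Sset b d k n = strings b d (k - kcount b d n)"

definition Mset :: "nat \<Rightarrow> nat \<Rightarrow> nat \<Rightarrow> nat \<Rightarrow> nat set" where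
  "Mset b d k n = {m. m > 0 \<and> blen b m \<ge> blen b n \<and> ld b (blen b n) m = n \<and> kcount b d m = k}"

definition mof :: "nat \<Rightarrow> nat \<Rightarrow> nat list \<Rightarrow> nat" where
  "mof b n X = n * b ^ length X + strval b X"

lemma mof_inj:
  assumes b: "b \<ge> 2" and n: "n > 0"
  shows "inj_on (mof b n) (strings b d K)"
proof (rule inj_onI)
  fix X Y assume X: "X \<in> strings b d K" and Y: "Y \<in> strings b d K" and e: "mof b n X = mof b n Y"
  have vX: "strval b X < b ^ length X" using X strval_lt unfolding strings_def by auto
  have vY: "strval b Y < b ^ length Y" using Y strval_lt unfolding strings_def by auto
  have "blen b n + length X = blen b n + length Y"
    using compose_facts(1)[OF b n vX] compose_facts(1)[OF b n vY] e unfolding mof_def by simp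
  then have lXY: "length X = length Y" by simp
  then have "strval b X = strval b Y" using e unfolding mof_def by simp
  then have "digs b (length X) (strval b X) = digs b (length Y) (strval b Y)" using lXY by simp
  then show "X = Y" using digs_strval[of b X] digs_strval[of b Y] X Y b unfolding strings_def by auto
qed

lemma mof_image:
  assumes b: "b \<ge> 2" and n: "n > 0" and k: "kcount b d n \<le> k"
  shows "mof b n ` Sset b d k n = Mset b d k n"
proof (rule set_eqI, rule iffI)
  fix m assume "m \<in> mof b n ` Sset b d k n"
  then obtain X where X: "X \<in> strings b d (k - kcount b d n)" and m: "m = mof b n X"
    unfolding Sset_def by auto
  have sX: "set X \<subseteq> {..<b}" and cX: "count_list X d = k - kcount b d n" using X unfolding strings_def by auto
  have vX: "strval b X < b ^ length X" using sX strval_lt by auto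
  have bl: "blen b m = blen b n + length X" using compose_facts(1)[OF b n vX] m unfolding mof_def by simp
  have kc: "kcount b d m = k" using compose_facts(2)[OF b n vX, of d] m dc_strval[of b X d] sX cX k b
    unfolding mof_def by simp
  have "m > 0" using m n b unfolding mof_def by simp
  moreover have "ld b (blen b n) m = n"
  proof -
    have "(strval b X + n * b ^ length X) div b ^ length X = n + strval b X div b ^ length X"
      using b by simp
    moreover have "blen b m - blen b n = length X" using bl by simp
    ultimately show ?thesis unfolding ld_def using vX by (simp add: add.commute m mof_def)
  qed
  ultimately show "m \<in> Mset b d k n" unfolding Mset_def using bl kc by simp
next
  fix m assume "m \<in> Mset b d k n"
  then have m0: "m > 0" and q: "blen b m \<ge> blen b n" and ldm: "ld b (blen b n) m = n" and km: "kcount b d m = k"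
    unfolding Mset_def by auto
  define L where "L = blen b m - blen b n"
  define X where "X = digs b L (m mod b ^ L)"
  have nd: "m div b ^ L = n" using ldm unfolding ld_def L_def .
  have sX: "set X \<subseteq> {..<b}" unfolding X_def using digs_set b by simp
  have vX: "strval b X = m mod b ^ L" unfolding X_def by (simp add: strval_digs)
  have lX: "length X = L" unfolding X_def by simp
  have mm: "m = mof b n X" unfolding mof_def vX lX using nd div_mult_mod_eq[of m "b ^ L"] by simp
  have vl: "strval b X < b ^ length X" using strval_lt sX by auto
  have "kcount b d m = kcount b d n + dc b d (length X) (strval b X)"
    using compose_facts(2)[OF b n vl, of d] mm unfolding mof_def by simp
  then have "count_list X d = k - kcount b d n" using km dc_strval[of b X d] sX b by simp
  then have "X \<in> Sset b d k n" unfolding Sset_def strings_def using sX by simp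
  then show "m \<in> mof b n ` Sset b d k n" using mm by blast
qed



definition DL :: "nat \<Rightarrow> nat \<Rightarrow> nat list set" where
  "DL b L = {X. set X \<subseteq> {..<b} \<and> length X = L}"

definition wt :: "nat \<Rightarrow> nat \<Rightarrow> nat list \<Rightarrow> real" where
  "wt b d X = (1 / real b ^ length X) * (1/2) ^ count_list X d"

lemma DL_Suc: "DL b (Suc L) = (\<lambda>(x,X). x # X) ` ({..<b} \<times> DL b L)"
  unfolding DL_def by (auto simp: length_Suc_conv image_def)

lemma DL_finite: "finite (DL b L)"
  unfolding DL_def by (rule finite_lists_length_eq) simp

lemma wt_Cons: "wt b d (x # X) = (1 / real b) * (if x = d then 1/2 else 1) * wt b d X"
  unfolding wt_def by auto

lemma sum_digit:
  assumes "d < b"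
  shows "(\<Sum>x<b. (1 / real b) * (if x = d then 1/2 else 1)) = (real b - 1/2) / real b"
proof -
  have "(\<Sum>x<b. (1 / real b) * (if x = d then 1/2 else 1)) = (\<Sum>x<b. 1 / real b - (if x = d then 1 / (2 * real b) else 0))"
    by (rule sum.cong) auto
  also have "\<dots> = real b * (1 / real b) - 1 / (2 * real b)"
    using assms by (simp add: sum_subtractf)
  also have "\<dots> = (real b - 1/2) / real b" using assms by (simp add: field_simps)
  finally show ?thesis .
qed

lemma sum_DL:
  assumes "d < b"
  shows "(\<Sum>X\<in>DL b L. wt b d X) = ((real b - 1/2) / real b) ^ L"
proof (induction L)
  case 0
  have "DL b 0 = {[]}" unfolding DL_def by auto
  then show ?case by (simp add: wt_def)
next
  case (Suc L)
  have inj: "inj_on (\<lambda>(x,X). x # X) ({..<b} \<times> DL b L)" by (auto simp: inj_on_def)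
  have "(\<Sum>X\<in>DL b (Suc L). wt b d X) = (\<Sum>p\<in>{..<b} \<times> DL b L. wt b d ((\<lambda>(x,X). x # X) p))"
    unfolding DL_Suc by (rule sum.reindex[OF inj, unfolded comp_def])
  also have "\<dots> = (\<Sum>x<b. \<Sum>X\<in>DL b L. (1 / real b) * (if x = d then 1/2 else 1) * wt b d X)"
    unfolding sum.cartesian_product' by (simp add: wt_Cons)
  also have "\<dots> = (\<Sum>x<b. (1 / real b) * (if x = d then 1/2 else 1)) * (\<Sum>X\<in>DL b L. wt b d X)"
    apply (simp add: sum_distrib_left sum_distrib_right) by (rule sum.swap)
  also have "\<dots> = ((real b - 1/2) / real b) ^ Suc L" using Suc sum_digit[OF assms] by simp
  finally show ?case .
qed

lemma wt_summable:
  assumes b: "b \<ge> 2" and d: "d < b"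
  shows "wt b d summable_on {X. set X \<subseteq> {..<b}}"
proof (rule nonneg_bdd_above_summable_on)
  show "\<And>x. x \<in> {X. set X \<subseteq> {..<b}} \<Longrightarrow> 0 \<le> wt b d x" by (simp add: wt_def)
  let ?q = "(real b - 1/2) / real b"
  have q: "0 \<le> ?q" "?q < 1" using b by (auto simp: field_simps)
  show "bdd_above (sum (wt b d) ` {F. F \<subseteq> {X. set X \<subseteq> {..<b}} \<and> finite F})"
  proof (rule bdd_aboveI2)
    fix F assume F: "F \<in> {F. F \<subseteq> {X. set X \<subseteq> {..<b}} \<and> finite F}"
    define N where "N = Suc (Max (insert 0 (length ` F)))"
    define G where "G = (\<Union>L<N. DL b L)"
    have fG: "finite G" unfolding G_def using DL_finite by auto
    have FG: "F \<subseteq> G"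
    proof
      fix X assume "X \<in> F"
      then have "length X < N" unfolding N_def using F by (simp add: le_imp_less_Suc)
      then show "X \<in> G" using \<open>X \<in> F\<close> F unfolding G_def DL_def by auto
    qed
    have "sum (wt b d) F \<le> sum (wt b d) G"
      by (rule sum_mono2[OF fG FG]) (simp add: wt_def)
    also have "\<dots> = (\<Sum>L<N. sum (wt b d) (DL b L))"
      unfolding G_def by (rule sum.UNION_disjoint) (simp, simp add: DL_finite, fastforce simp: DL_def)
    also have "\<dots> = (\<Sum>L<N. ?q ^ L)" using sum_DL[OF d] by simp
    also have "\<dots> = (1 - ?q ^ N) / (1 - ?q)" using q by (simp add: sum_gp_strict)
    also have "\<dots> \<le> 1 / (1 - ?q)" using q by (intro divide_right_mono) auto
    finally show "sum (wt b d) F \<le> 1 / (1 - ?q)" .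
  qed
qed

lemma F_summable:
  assumes b: "b \<ge> 2" and d: "d < b"
  shows "(\<lambda>X. 1 / real b ^ length X) summable_on strings b d K"
proof -
  have "wt b d summable_on strings b d K"
    by (rule summable_on_subset[OF wt_summable[OF b d]]) (auto simp: strings_def)
  then have "(\<lambda>X. wt b d X * 2 ^ K) summable_on strings b d K" by (rule summable_on_cmult_left)
  moreover have "wt b d X * 2 ^ K = 1 / real b ^ length X" if "X \<in> strings b d K" for X
    using that by (simp add: wt_def strings_def power_one_over[symmetric] power_mult_distrib[symmetric])
  ultimately show ?thesis by (rule summable_on_cong[THEN iffD1, rotated]) 
qed



lemma xx_bounds:
  assumes "b \<ge> 2" "set X \<subseteq> {..<b}"
  shows "0 \<le> real (strval b X) / real b ^ length X" "real (strval b X) / real b ^ length X < 1"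
proof -
  have "strval b X < b ^ length X" using strval_lt assms(2) by auto
  then have "real (strval b X) < real b ^ length X" by (metis of_nat_less_iff of_nat_power)
  then show "real (strval b X) / real b ^ length X < 1" using assms(1) by simp
qed simp

lemma fin_infsum:
  fixes f :: "'i \<Rightarrow> 'a \<Rightarrow> real"
  assumes "finite I" "\<And>i. i \<in> I \<Longrightarrow> f i summable_on A"
  shows "(\<lambda>x. \<Sum>i\<in>I. f i x) summable_on A \<and> infsum (\<lambda>x. \<Sum>i\<in>I. f i x) A = (\<Sum>i\<in>I. infsum (f i) A)"
  using assms
proof (induction I rule: finite_induct)
  case empty then show ?case by simp
next
  case (insert i I)
  then have s1: "f i summable_on A" and IH: "(\<lambda>x. \<Sum>i\<in>I. f i x) summable_on A"
     "infsum (\<lambda>x. \<Sum>i\<in>I. f i x) A = (\<Sum>i\<in>I. infsum (f i) A)" by auto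
  have "(\<lambda>x. f i x + (\<Sum>i\<in>I. f i x)) summable_on A" using summable_on_add[OF s1 IH(1)] .
  moreover have "infsum (\<lambda>x. f i x + (\<Sum>i\<in>I. f i x)) A = infsum (f i) A + (\<Sum>i\<in>I. infsum (f i) A)"
    using infsum_add[OF s1 IH(1)] IH(2) by simp
  ultimately show ?case using insert by simp
qed

lemma infsum_pow_tendsto:
  fixes f y :: "'a \<Rightarrow> real"
  assumes sf: "f summable_on A" and f0: "\<And>X. X \<in> A \<Longrightarrow> 0 \<le> f X"
    and y0: "\<And>X. X \<in> A \<Longrightarrow> 0 \<le> y X" and y1: "\<And>X. X \<in> A \<Longrightarrow> y X < 1"
  shows "(\<lambda>N. infsum (\<lambda>X. f X * y X ^ N) A) \<longlonglongrightarrow> 0"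
proof -
  have sg: "(\<lambda>X. f X * y X ^ N) summable_on B" if "B \<subseteq> A" for N B
  proof (rule summable_on_comparison_test[OF summable_on_subset[OF sf that]])
    fix X assume "X \<in> B" then have "X \<in> A" using that by auto
    then show "f X * y X ^ N \<le> f X" "0 \<le> f X * y X ^ N"
      using f0 y0 y1 by (auto intro!: mult_left_le power_le_one simp: less_imp_le)
  qed
  have g0: "0 \<le> infsum (\<lambda>X. f X * y X ^ N) A" for N
    by (rule infsum_nonneg) (use f0 y0 in auto)
  show ?thesis
  proof (rule order_tendstoI)
    fix a :: real assume "a < 0"
    then show "eventually (\<lambda>N. a < infsum (\<lambda>X. f X * y X ^ N) A) sequentially"
      by (intro always_eventually allI) (rule less_le_trans[OF \<open>a < 0\<close> g0])
  next
    fix r :: real assume r: "0 < r"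
    obtain B where B: "finite B" "B \<subseteq> A" "dist (sum f B) (infsum f A) \<le> r/3"
      using infsum_finite_approximation[OF sf, of "r/3"] r by auto
    have sB: "f summable_on B" using B by simp
    have t1: "infsum f (A - B) = infsum f A - sum f B"
      using infsum_Diff[OF sf sB B(2)] B(1) by simp
    have "infsum f A - sum f B \<le> r/3"
      using B(3) abs_ge_minus_self[of "sum f B - infsum f A"] unfolding dist_real_def by linarith
    then have tail: "infsum f (A - B) \<le> r/3" using t1 by simp
    have "(\<lambda>N. \<Sum>X\<in>B. f X * y X ^ N) \<longlonglongrightarrow> (\<Sum>X\<in>B. f X * 0)"
    proof (rule tendsto_sum)
      fix X assume "X \<in> B" then have "X \<in> A" using B by auto
      then have "norm (y X) < 1" using y0 y1 by simp
      then show "(\<lambda>N. f X * y X ^ N) \<longlonglongrightarrow> f X * 0"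
        by (intro tendsto_mult tendsto_const LIMSEQ_power_zero)
    qed
    then have lim0: "(\<lambda>N. \<Sum>X\<in>B. f X * y X ^ N) \<longlonglongrightarrow> 0" by simp
    have "eventually (\<lambda>N. (\<Sum>X\<in>B. f X * y X ^ N) < r/3) sequentially"
      by (rule order_tendstoD(2)[OF lim0]) (use r in simp)
    then show "eventually (\<lambda>N. infsum (\<lambda>X. f X * y X ^ N) A < r) sequentially"
    proof eventually_elim
      case (elim N)
      have "infsum (\<lambda>X. f X * y X ^ N) (A - B) = infsum (\<lambda>X. f X * y X ^ N) A - infsum (\<lambda>X. f X * y X ^ N) B"
        by (rule infsum_Diff[OF sg sg B(2)]) (use B in auto)
      then have "infsum (\<lambda>X. f X * y X ^ N) A = (\<Sum>X\<in>B. f X * y X ^ N) + infsum (\<lambda>X. f X * y X ^ N) (A - B)"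
        using B(1) by simp
      also have "infsum (\<lambda>X. f X * y X ^ N) (A - B) \<le> infsum f (A - B)"
      proof (rule infsum_mono)
        show "(\<lambda>X. f X * y X ^ N) summable_on A - B" by (rule sg) auto
        show "f summable_on A - B" by (rule summable_on_subset[OF sf]) auto
        fix X assume "X \<in> A - B"
        then show "f X * y X ^ N \<le> f X" using f0 y0 y1 by (auto intro!: mult_left_le power_le_one simp: less_imp_le)
      qed
      finally show ?case using elim tail r by linarith
    qed
  qed
qed

lemma geom_alg:
  fixes c x n s p q :: real
  assumes "p > 0" "n > 0" "x \<ge> 0"
  shows "c/(n+x) - s*(c*q/(p*(n+x))) + s/(p*n)*(c*q) = c/(n+x) - (-s)*(c*(q*x)/((p*n)*(n+x)))"
proof -
  have nx: "n + x > 0" using assms by simp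
  have a: "1/(p*n) = (n+x)/((p*n)*(n+x))" using nx assms by simp
  have b: "1/(p*(n+x)) = n/((p*n)*(n+x))" using nx assms by simp
  have "1/(p*n) - 1/(p*(n+x)) = ((n+x) - n)/((p*n)*(n+x))"
    by (subst a, subst b, rule diff_divide_distrib[symmetric])
  then have k: "1/(p*n) - 1/(p*(n+x)) = x/((p*n)*(n+x))" by simp
  have "s/(p*n)*(c*q) - s*(c*q/(p*(n+x))) = (s*c*q)*(1/(p*n) - 1/(p*(n+x)))" by (simp add: algebra_simps)
  also have "\<dots> = (s*c*q) * (x/((p*n)*(n+x)))" using k by simp
  also have "\<dots> = s*(c*(q*x)/((p*n)*(n+x)))" by simp
  finally show ?thesis by simp
qed

lemma geom_identity:
  fixes c x n :: real
  assumes "n > 0" "x \<ge> 0"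
  shows "(\<Sum>j<N. (-1)^j / n^(j+1) * (c * x^j)) = c / (n + x) - (-1)^N * (c * x^N / (n^N * (n + x)))"
proof (induction N)
  case 0 then show ?case using assms by simp
next
  case (Suc N)
  have "(\<Sum>j<Suc N. (-1)^j / n^(j+1) * (c * x^j)) = c / (n + x) - (-1)^N * (c * x^N / (n^N * (n + x))) + (-1)^N / n^(N+1) * (c * x^N)"
    using Suc by simp
  also have "\<dots> = c / (n + x) - (-((-1)^N)) * (c * (x^N * x) / ((n^N * n) * (n + x)))"
    using geom_alg[of "n^N" n x c "(-1)^N" "x^N"] assms by (simp add: mult_ac)
  also have "\<dots> = c / (n + x) - (-1)^Suc N * (c * x^Suc N / (n^Suc N * (n + x)))"
    by (simp add: mult_ac)
  finally show ?case .
qed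



lemma div_le_self_real: "0 \<le> (a::real) \<Longrightarrow> 1 \<le> c \<Longrightarrow> a / c \<le> a"
  using mult_left_mono[of 1 c a] by (simp add: divide_le_eq)

lemma infsum_lin:
  fixes g h :: "'a \<Rightarrow> real"
  assumes "g summable_on A" "h summable_on A"
  shows "infsum (\<lambda>X. g X - c * h X) A = infsum g A - c * infsum h A"
proof -
  have s2: "(\<lambda>X. - (c * h X)) summable_on A"
    using summable_on_cmult_right[OF assms(2), of c] by (simp add: summable_on_uminus)
  have "infsum (\<lambda>X. g X + - (c * h X)) A = infsum g A + infsum (\<lambda>X. - (c * h X)) A"
    by (rule infsum_add[OF assms(1) s2])
  also have "infsum (\<lambda>X. - (c * h X)) A = - (c * infsum h A)"
    by (simp add: infsum_uminus infsum_cmult_right assms(2))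
  finally show ?thesis by simp
qed

theorem mainTheorem6:
  fixes b d k n :: nat
  assumes "b \<ge> 2" and "d < b" and "n > 0" and "kcount b d n \<le> k"
  shows "(\<lambda>j. (-1) ^ j * umom b d (k - kcount b d n) j / real n ^ (j + 1)) sums
           (\<Sum>\<^sub>\<infinity> m \<in> {m. m > 0 \<and> blen b m \<ge> blen b n \<and> ld b (blen b n) m = n
                                 \<and> kcount b d m = k}. 1 / real m)"
proof -
  note b2 = assms(1) and dd = assms(2) and n0 = assms(3) and kk = assms(4)
  define K where "K = k - kcount b d n"
  define S where "S = strings b d K"
  define F where "F = (\<lambda>X::nat list. 1 / real b ^ length X)"
  define xx where "xx = (\<lambda>X. real (strval b X) / real b ^ length X)"
  define e where "e = (\<lambda>N X. F X * xx X ^ N / (real n ^ N * (real n + xx X)))"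
  have sF: "F summable_on S" unfolding F_def S_def by (rule F_summable[OF b2 dd])
  have F0: "0 \<le> F X" for X unfolding F_def by simp
  have xx0: "0 \<le> xx X" if "X \<in> S" for X
    using xx_bounds[OF b2, of X] that unfolding xx_def S_def strings_def by auto
  have xx1: "xx X < 1" if "X \<in> S" for X
    using xx_bounds[OF b2, of X] that unfolding xx_def S_def strings_def by auto
  have n1: "1 \<le> real n" using n0 by simp
  have um: "umom b d K j = infsum (\<lambda>X. F X * xx X ^ j) S" for j
    unfolding umom_def F_def xx_def S_def ..
  have le1: "F X * xx X ^ j \<le> F X" if "X \<in> S" for X j
    using F0[of X] xx0[OF that] xx1[OF that] by (auto intro!: mult_left_le power_le_one simp: less_imp_le)
  have sg: "(\<lambda>X. F X * xx X ^ j) summable_on S" for j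
    by (rule summable_on_comparison_test[OF sF]) (use le1 F0 xx0 in auto)
  have den1: "1 \<le> real n ^ N * (real n + xx X)" if "X \<in> S" for X N
  proof -
    have "1 * 1 \<le> real n ^ N * (real n + xx X)"
      using n1 xx0[OF that] by (intro mult_mono one_le_power) auto
    then show ?thesis by simp
  qed
  have e_le: "e N X \<le> F X * xx X ^ N" if "X \<in> S" for X N
    unfolding e_def using den1[OF that] F0[of X] xx0[OF that]
    by (intro div_le_self_real) auto
  have e0: "0 \<le> e N X" if "X \<in> S" for X N
    unfolding e_def using F0[of X] xx0[OF that] n1 by auto
  have se: "e N summable_on S" for N
    by (rule summable_on_comparison_test[OF sg[of N]]) (use e_le e0 in auto)
  have Tle: "F X / (real n + xx X) \<le> F X" if "X \<in> S" for X
    using F0[of X] xx0[OF that] n1 by (intro div_le_self_real) auto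
  have sT: "(\<lambda>X. F X / (real n + xx X)) summable_on S"
    by (rule summable_on_comparison_test[OF sF]) (use Tle F0 xx0 n1 in auto)
  let ?T = "infsum (\<lambda>X. F X / (real n + xx X)) S"
  have P: "(\<Sum>j<N. (-1)^j * umom b d K j / real n^(j+1)) = ?T - (-1)^N * infsum (e N) S" for N
  proof -
    have "(\<Sum>j<N. (-1)^j * umom b d K j / real n^(j+1))
        = (\<Sum>j<N. infsum (\<lambda>X. (-1)^j / real n^(j+1) * (F X * xx X^j)) S)"
    proof (rule sum.cong[OF refl])
      fix j assume "j \<in> {..<N}"
      have "infsum (\<lambda>X. ((-1)^j / real n^(j+1)) * (F X * xx X^j)) S = ((-1)^j / real n^(j+1)) * infsum (\<lambda>X. F X * xx X^j) S"
        by (rule infsum_cmult_right) (rule sg)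
      then show "(-1)^j * umom b d K j / real n^(j+1) = infsum (\<lambda>X. (-1)^j / real n^(j+1) * (F X * xx X^j)) S"
        by (simp add: um)
    qed
    also have "\<dots> = infsum (\<lambda>X. \<Sum>j<N. (-1)^j / real n^(j+1) * (F X * xx X^j)) S"
    proof -
      have si: "\<And>j. j \<in> {..<N} \<Longrightarrow> (\<lambda>X. (-1)^j / real n^(j+1) * (F X * xx X^j)) summable_on S"
        by (rule summable_on_cmult_right[OF sg])
      show ?thesis
        by (rule conjunct2[OF fin_infsum[of "{..<N}" "\<lambda>j X. (-1)^j / real n^(j+1) * (F X * xx X^j)" S, OF finite_lessThan si], symmetric])
    qed
    also have "\<dots> = infsum (\<lambda>X. F X / (real n + xx X) - (-1)^N * e N X) S"
      by (rule infsum_cong) (use geom_identity[of "real n"] n0 xx0 in \<open>simp add: e_def\<close>)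
    also have "\<dots> = ?T - (-1)^N * infsum (e N) S"
      by (rule infsum_lin[OF sT se])
    finally show ?thesis .
  qed
  have bound: "norm ((-1)^N * infsum (e N) S) \<le> umom b d K N" for N
  proof -
    have "0 \<le> infsum (e N) S" by (rule infsum_nonneg) (use e0 in auto)
    moreover have "infsum (e N) S \<le> umom b d K N"
      unfolding um by (rule infsum_mono[OF se sg]) (use e_le in auto)
    ultimately show ?thesis by (simp add: abs_mult)
  qed
  have utend: "(\<lambda>N. umom b d K N) \<longlonglongrightarrow> 0"
    unfolding um by (rule infsum_pow_tendsto[OF sF]) (use F0 xx0 xx1 in auto)
  have etend: "(\<lambda>N. (-1)^N * infsum (e N) S) \<longlonglongrightarrow> 0"
    by (rule Lim_null_comparison[OF _ utend]) (use bound in \<open>intro always_eventually allI\<close>)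
  have lim: "(\<lambda>N. \<Sum>j<N. (-1)^j * umom b d K j / real n^(j+1)) \<longlonglongrightarrow> ?T"
    unfolding P using tendsto_diff[OF tendsto_const etend, of ?T] by simp
  have Meq: "{m. m > 0 \<and> blen b m \<ge> blen b n \<and> ld b (blen b n) m = n \<and> kcount b d m = k} = mof b n ` S"
    using mof_image[OF b2 n0 kk] unfolding Mset_def Sset_def S_def K_def by simp
  have "(\<Sum>\<^sub>\<infinity> m \<in> mof b n ` S. 1 / real m) = infsum ((\<lambda>m. 1 / real m) \<circ> mof b n) S"
    unfolding S_def by (rule infsum_reindex[OF mof_inj[OF b2 n0]])
  also have "\<dots> = ?T"
  proof (rule infsum_cong)
    fix X assume "X \<in> S"
    have bp: "real b ^ length X > 0" using b2 by simp
    have "real (mof b n X) = real b ^ length X * (real n + xx X)"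
      unfolding mof_def xx_def using bp by (simp add: field_simps)
    then show "((\<lambda>m. 1 / real m) \<circ> mof b n) X = F X / (real n + xx X)"
      unfolding F_def by simp
  qed
  finally have Teq: "(\<Sum>\<^sub>\<infinity> m \<in> mof b n ` S. 1 / real m) = ?T" .
  have "(\<lambda>j. (-1) ^ j * umom b d K j / real n ^ (j + 1)) sums ?T"
    unfolding sums_def using lim .
  then show ?thesis unfolding Meq Teq K_def .
qed

end
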